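(* Let $S\in\mathbb{R}^{n_\theta\times n_\theta}$, $F\in\mathbb{R}^{n_x\times n_\theta}$, and $\theta_0\in\mathbb{R}^{n_\theta}$ satisfy the standing assumptions in the context, with excited modes $v_1,\dots,v_{k_1+k_2}$ and eigenvalues $\lambda_1,\dots,\lambda_{k_1+k_2}$. Let $y_n$, $z_\ell$, $Z_\ell$, $Y_n$ and $w_j$ be as defined in the context. (i) For every $\ell\ge 0$, the vectors $z_0,z_1,\dots,z_\ell$ are pairwise orthogonal. Some of them may be the zero vector. (ii) Assume further that $\lambda_1,\dots,\lambda_{k_1+k_2}$ are pairwise distinct, and that $\lambda_i\neq 1$ for every $i=1,\dots,k_1$. Let $n\ge 1$ and let $m$ be an integer with $1\le m\le \min(n,k_1)$. Then $w_1,\dots,w_m$ are linearly independent. Here $w_1,\dots,w_m$ are the first $m$ columns of the matrix $[\,y_1,\ Y_n\,]$.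
   Context: Standing assumptions: $S\in\mathbb{R}^{n_\theta\times n_\theta}$ and $F\in\mathbb{R}^{n_x\times n_\theta}$. $F^\dagger$ denotes the Moore–Penrose pseudoinverse, so that $F^\dagger F$ is the orthogonal projection onto $\mathcal{R}(F^\top)$. The initial vector $\theta_0\in\mathbb{R}^{n_\theta}$ can be written as $\theta_0=\sum_{i=1}^{k_1+k_2}\rho_i v_i$ with $\rho_i\in\mathbb{C}\setminus\{0\}$, where each $v_i\in\mathbb{C}^{n_\theta}$ is an eigenvector of $S$, i.e. $Sv_i=\lambda_i v_i$. The first $k_1$ of them lie in $\mathcal{R}(F^\top)$ (complexified), i.e. $F^\dagger F v_i=v_i$ for $i\le k_1$. The remaining $k_2$ lie in $\mathcal{R}(F^\top)^\perp$, i.e. $F^\dagger F v_i=0$ for $k_1<i\le k_1+k_2$. These $v_i$ are called the excited modes of $S$. Data: for $n\ge1$ let $y_n:=F^\dagger F\,S^{n-1}(S-I)\theta_0\in\mathbb{R}^{n_\theta}$. In the paper, $y_n=F^\dagger(\Delta x_n-\Delta f_n)$ is computed from state measurements, and the trapezoidal integration error is assumed to be zero, which gives this identity. Recursions: - Set $z_0:=y_1$ and $Z_0:=[z_0]$. - For $\ell\ge1$, set $z_\ell:=(I-Z_{\ell-1}Z_{\ell-1}^\dagger)\,y_{\ell+1}$, which is the orthogonal projection of $y_{\ell+1}$ onto $\mathcal{R}(Z_{\ell-1})^\perp$. Then set $Z_\ell:=[\,Z_{\ell-1},\ z_\ell\,]=[z_0,\dots,z_\ell]$. - Set $Y_2:=[\,y_2\,]$.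 For $n\ge3$, set $Y_n:=[\,Y_{n-1},\ y_n-Y_{n-1}Z_{n-3}^\dagger y_{n-1}\,]$. Finally define $w_1:=y_1$, $w_2:=y_2$, and for $j\ge3$ let $w_j:=y_j-Y_{j-1}Z_{j-3}^\dagger y_{j-1}$, the last column of $Y_j$. Thus $[\,y_1,\ Y_n\,]=[w_1,\dots,w_n]$. *)

theory Defs
  imports "Jordan_Normal_Form.Matrix"
begin

definition pinv :: "real mat \<Rightarrow> real mat" where
  "pinv A = (THE X. X \<in> carrier_mat (dim_col A) (dim_row A)
              \<and> A * X * A = A \<and> X * A * X = X
              \<and> transpose_mat (A * X) = A * X \<and> transpose_mat (X * A) = X * A)"

definition yv :: "real mat \<Rightarrow> real mat \<Rightarrow> real vec \<Rightarrow> nat \<Rightarrow> real vec" where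
  "yv S F th n = (pinv F * F * (S ^\<^sub>m (n - 1)) * (S - 1\<^sub>m (dim_row S))) *\<^sub>v th"

fun zs :: "real mat \<Rightarrow> real mat \<Rightarrow> real vec \<Rightarrow> nat \<Rightarrow> real vec list" where
  "zs S F th 0 = [yv S F th 1]"
| "zs S F th (Suc l) =
     (let Z = mat_of_cols (dim_vec th) (zs S F th l)
      in zs S F th l @ [(1\<^sub>m (dim_vec th) - Z * pinv Z) *\<^sub>v yv S F th (l + 2)])"

definition Zmat :: "real mat \<Rightarrow> real mat \<Rightarrow> real vec \<Rightarrow> nat \<Rightarrow> real mat" where
  "Zmat S F th l = mat_of_cols (dim_vec th) (zs S F th l)"

definition zv :: "real mat \<Rightarrow> real mat \<Rightarrow> real vec \<Rightarrow> nat \<Rightarrow> real vec" where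
  "zv S F th l = last (zs S F th l)"

fun Ycols :: "real mat \<Rightarrow> real mat \<Rightarrow> real vec \<Rightarrow> nat \<Rightarrow> real vec list" where
  "Ycols S F th 0 = []"
| "Ycols S F th (Suc 0) = []"
| "Ycols S F th (Suc (Suc 0)) = [yv S F th 2]"
| "Ycols S F th (Suc (Suc (Suc k))) =
     Ycols S F th (Suc (Suc k)) @
       [yv S F th (k + 3)
        - (mat_of_cols (dim_vec th) (Ycols S F th (Suc (Suc k))) * pinv (Zmat S F th k))
            *\<^sub>v yv S F th (k + 2)]"

definition Ymat :: "real mat \<Rightarrow> real mat \<Rightarrow> real vec \<Rightarrow> nat \<Rightarrow> real mat" where
  "Ymat S F th n = mat_of_cols (dim_vec th) (Ycols S F th n)"

definition Wmat :: "real mat \<Rightarrow> real mat \<Rightarrow> real vec \<Rightarrow> nat \<Rightarrow> real mat" where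
  "Wmat S F th n = mat_of_cols (dim_vec th) (yv S F th 1 # Ycols S F th n)"

end

theory Submission
  imports Defs "HOL-Computational_Algebra.Polynomial"
begin

definition pen :: "real mat \<Rightarrow> real mat \<Rightarrow> bool" where
  "pen A X \<longleftrightarrow> X \<in> carrier_mat (dim_col A) (dim_row A)
              \<and> A * X * A = A \<and> X * A * X = X
              \<and> transpose_mat (A * X) = A * X \<and> transpose_mat (X * A) = X * A"

lemma pen_unique:
  assumes X: "pen A X" and Y: "pen A Y" shows "X = Y"
proof -
  define n k where "n = dim_row A" and "k = dim_col A"
  have A: "A \<in> carrier_mat n k" unfolding n_def k_def by auto
  have Xc: "X \<in> carrier_mat k n" and Yc: "Y \<in> carrier_mat k n"
    using X Y unfolding pen_def n_def k_def by auto
  note XX = X[unfolded pen_def] and YY = Y[unfolded pen_def]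
  have TAc: "transpose_mat A \<in> carrier_mat k n" and TXc: "transpose_mat X \<in> carrier_mat n k"
    and TYc: "transpose_mat Y \<in> carrier_mat n k" using A Xc Yc by auto
  have TA1: "transpose_mat A = transpose_mat A * (A * Y)"
  proof -
    have "transpose_mat A = transpose_mat ((A * Y) * A)" using YY by simp
    also have "\<dots> = transpose_mat A * transpose_mat (A * Y)"
      by (rule transpose_mult[OF mult_carrier_mat[OF A Yc] A])
    also have "\<dots> = transpose_mat A * (A * Y)" using YY by simp
    finally show ?thesis .
  qed
  have TA2: "transpose_mat A = (X * A) * transpose_mat A"
  proof -
    have "transpose_mat A = transpose_mat (A * (X * A))" using XX A Xc by simp
    also have "\<dots> = transpose_mat (X * A) * transpose_mat A"
      by (rule transpose_mult[OF A mult_carrier_mat[OF Xc A]])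
    also have "\<dots> = (X * A) * transpose_mat A" using XX by simp
    finally show ?thesis .
  qed
  have "X = X * (A * X)" using XX A Xc by simp
  also have "\<dots> = X * transpose_mat (A * X)" using XX by simp
  also have "\<dots> = X * (transpose_mat X * transpose_mat A)"
    using transpose_mult[OF A Xc] by simp
  also have "\<dots> = X * (transpose_mat X * (transpose_mat A * (A * Y)))"
    using TA1 by simp
  also have "\<dots> = X * ((transpose_mat X * transpose_mat A) * (A * Y))"
    by (subst assoc_mult_mat[OF TXc TAc mult_carrier_mat[OF A Yc]]) (rule refl)
  also have "\<dots> = X * (transpose_mat (A * X) * (A * Y))"
    using transpose_mult[OF A Xc] by simp
  also have "\<dots> = X * ((A * X) * (A * Y))" using XX by simp
  also have "\<dots> = (X * A * X) * A * Y"
  proof -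
    have AX: "A * X \<in> carrier_mat n n" using A Xc by auto
    have AY: "A * Y \<in> carrier_mat n n" using A Yc by auto
    have XAX: "X * A * X \<in> carrier_mat k n" using A Xc by auto
    have "(X * A * X) * A * Y = (X * A * X) * (A * Y)" using assoc_mult_mat[OF XAX A Yc] .
    also have "\<dots> = X * (A * X) * (A * Y)" using assoc_mult_mat[OF Xc A Xc] by simp
    also have "\<dots> = X * ((A * X) * (A * Y))" using assoc_mult_mat[OF Xc AX AY] .
    finally show ?thesis by simp
  qed
  also have "\<dots> = X * A * Y" using XX by simp
  finally have 1: "X = X * A * Y" .
  have "Y = (Y * A) * Y" using YY A Yc by simp
  also have "\<dots> = transpose_mat (Y * A) * Y" using YY by simp
  also have "\<dots> = (transpose_mat A * transpose_mat Y) * Y"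
    using transpose_mult[OF Yc A] by simp
  also have "\<dots> = (((X * A) * transpose_mat A) * transpose_mat Y) * Y"
    using TA2 by simp
  also have "\<dots> = (X * A) * (transpose_mat A * transpose_mat Y) * Y"
    by (subst assoc_mult_mat[OF mult_carrier_mat[OF Xc A] TAc TYc]) (rule refl)
  also have "\<dots> = (X * A) * transpose_mat (Y * A) * Y"
    using transpose_mult[OF Yc A] by simp
  also have "\<dots> = (X * A) * (Y * A) * Y" using YY by simp
  also have "\<dots> = X * A * (Y * A * Y)"
  proof -
    have XA: "X * A \<in> carrier_mat k k" using A Xc by auto
    have YA: "Y * A \<in> carrier_mat k k" using A Yc by auto
    show ?thesis using assoc_mult_mat[OF XA YA Yc] assoc_mult_mat[OF Yc A Yc] by simp
  qed
  also have "\<dots> = X * A * Y" using YY by simp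
  finally show ?thesis using 1 by simp
qed

lemma pinv_eq: "pen A X \<Longrightarrow> pinv A = X"
  unfolding pinv_def
  apply (rule the_equality)
  using pen_unique unfolding pen_def by blast+

lemma mm_idx: assumes "A \<in> carrier_mat a b" "B \<in> carrier_mat b c" "i < a" "j < c"
  shows "(A * B) $$ (i,j) = (\<Sum>l = 0..<b. A $$ (i,l) * B $$ (l,j))"
  using assms by (auto simp: scalar_prod_def intro!: sum.cong)

definition ortho :: "nat \<Rightarrow> real vec list \<Rightarrow> bool" where
  "ortho n zl \<longleftrightarrow> set zl \<subseteq> carrier_vec n \<and>
     (\<forall>i<length zl. \<forall>j<length zl. i \<noteq> j \<longrightarrow> zl ! i \<bullet> zl ! j = 0)"

definition dd :: "real vec \<Rightarrow> real" where
  "dd z = (if z \<bullet> z = 0 then 0 else 1 / (z \<bullet> z))"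

definition pX :: "nat \<Rightarrow> real vec list \<Rightarrow> real mat" where
  "pX n zl = mat (length zl) n (\<lambda>(j,r). dd (zl ! j) * zl ! j $ r)"

lemma self_prod_zero: assumes "(z::real vec) \<bullet> z = 0" "r < dim_vec z" shows "z $ r = 0"
proof -
  have "(\<Sum>i = 0..<dim_vec z. z $ i * z $ i) = 0" using assms(1) unfolding scalar_prod_def .
  hence "\<forall>i\<in>{0..<dim_vec z}. z $ i * z $ i = 0"
    by (subst sum_nonneg_eq_0_iff[symmetric]) auto
  thus ?thesis using assms(2) by auto
qed

lemma XZ_eq: assumes "ortho n zl"
  shows "pX n zl * mat_of_cols n zl = mat (length zl) (length zl)
            (\<lambda>(i,j). if i = j \<and> zl ! i \<bullet> zl ! i \<noteq> 0 then 1 else 0)"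
proof (rule eq_matI)
  fix i j assume i: "i < dim_row (mat (length zl) (length zl)
            (\<lambda>(i,j). if i = j \<and> zl ! i \<bullet> zl ! i \<noteq> 0 then (1::real) else 0))"
    and j: "j < dim_col (mat (length zl) (length zl)
            (\<lambda>(i,j). if i = j \<and> zl ! i \<bullet> zl ! i \<noteq> 0 then (1::real) else 0))"
  have i': "i < length zl" and j': "j < length zl" using i j by auto
  have zi: "zl ! i \<in> carrier_vec n" and zj: "zl ! j \<in> carrier_vec n"
    using assms i' j' unfolding ortho_def by auto
  have "(pX n zl * mat_of_cols n zl) $$ (i,j) = row (pX n zl) i \<bullet> col (mat_of_cols n zl) j"
    using i' j' by (simp add: pX_def)
  also have "\<dots> = (\<Sum>r = 0..<n. dd (zl ! i) * zl ! i $ r * zl ! j $ r)"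
    using i' j' zi zj unfolding scalar_prod_def by (simp add: pX_def)
  also have "\<dots> = dd (zl ! i) * (zl ! i \<bullet> zl ! j)"
    using zj unfolding scalar_prod_def by (simp add: sum_distrib_left mult.assoc)
  also have "\<dots> = (if i = j \<and> zl ! i \<bullet> zl ! i \<noteq> 0 then 1 else 0)"
    using assms i' j' unfolding ortho_def dd_def by auto
  finally show "(pX n zl * mat_of_cols n zl) $$ (i,j) = mat (length zl) (length zl)
            (\<lambda>(i,j). if i = j \<and> zl ! i \<bullet> zl ! i \<noteq> 0 then 1 else 0) $$ (i,j)"
    using i' j' by simp
qed (auto simp: pX_def)

lemma pen_ortho: assumes o: "ortho n zl"
  shows "pen (mat_of_cols n zl) (pX n zl)"
proof -
  define Z where "Z = mat_of_cols n zl"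
  define X where "X = pX n zl"
  define k where "k = length zl"
  define E where "E = mat k k (\<lambda>(i,j). if i = j \<and> zl ! i \<bullet> zl ! i \<noteq> 0 then (1::real) else 0)"
  have Zc: "Z \<in> carrier_mat n k" unfolding Z_def k_def by simp
  have Xc: "X \<in> carrier_mat k n" unfolding X_def pX_def k_def by simp
  have XZ: "X * Z = E" unfolding X_def Z_def E_def k_def using XZ_eq[OF o] .
  have zc: "\<And>j. j < k \<Longrightarrow> zl ! j \<in> carrier_vec n" using o unfolding ortho_def k_def by auto
  have Zidx: "\<And>r j. r < n \<Longrightarrow> j < k \<Longrightarrow> Z $$ (r,j) = zl ! j $ r"
    unfolding Z_def mat_of_cols_def k_def by simp
  have Xidx: "\<And>j r. r < n \<Longrightarrow> j < k \<Longrightarrow> X $$ (j,r) = dd (zl ! j) * zl ! j $ r"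
    unfolding X_def pX_def k_def by simp
  have 1: "Z * X * Z = Z"
  proof -
    have "Z * X * Z = Z * E" using assoc_mult_mat[OF Zc Xc Zc] XZ by simp
    also have "\<dots> = Z"
    proof (rule eq_matI)
      fix r j assume r: "r < dim_row Z" and j: "j < dim_col Z"
      have r': "r < n" and j': "j < k" using r j Zc by auto
      have "(Z * E) $$ (r,j) = (\<Sum>i = 0..<k. Z $$ (r,i) * E $$ (i,j))"
        by (rule mm_idx[OF Zc _ r' j']) (simp add: E_def)
      also have "\<dots> = (\<Sum>i \<in> {j}. Z $$ (r,i) * E $$ (i,j))"
        by (rule sum.mono_neutral_right) (use j' in \<open>auto simp: E_def\<close>)
      also have "\<dots> = Z $$ (r,j)"
        using self_prod_zero[of "zl ! j" r] zc[OF j'] r' j' by (auto simp: E_def Zidx)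
      finally show "(Z * E) $$ (r,j) = Z $$ (r,j)" .
    qed (use Zc in \<open>auto simp: E_def\<close>)
    finally show ?thesis .
  qed
  have 2: "X * Z * X = X"
  proof -
    have "X * Z * X = E * X" using XZ by simp
    also have "\<dots> = X"
    proof (rule eq_matI)
      fix i r assume i: "i < dim_row X" and r: "r < dim_col X"
      have i': "i < k" and r': "r < n" using i r Xc by auto
      have "(E * X) $$ (i,r) = (\<Sum>j = 0..<k. E $$ (i,j) * X $$ (j,r))"
        by (rule mm_idx[OF _ Xc i' r']) (simp add: E_def)
      also have "\<dots> = (\<Sum>j \<in> {i}. E $$ (i,j) * X $$ (j,r))"
        by (rule sum.mono_neutral_right) (use i' in \<open>auto simp: E_def\<close>)
      also have "\<dots> = X $$ (i,r)"
        using i' r' by (auto simp: E_def Xidx dd_def)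
      finally show "(E * X) $$ (i,r) = X $$ (i,r)" .
    qed (use Xc in \<open>auto simp: E_def\<close>)
    finally show ?thesis .
  qed
  have ZXidx: "\<And>r s. r < n \<Longrightarrow> s < n \<Longrightarrow> (Z * X) $$ (r,s) = (\<Sum>j = 0..<k. zl ! j $ r * (dd (zl ! j) * zl ! j $ s))"
    by (subst mm_idx[OF Zc Xc], auto simp: Zidx Xidx)
  have 3: "transpose_mat (Z * X) = Z * X"
  proof (rule eq_matI)
    fix i j assume "i < dim_row (Z * X)" "j < dim_col (Z * X)"
    hence i: "i < n" and j: "j < n" using Zc Xc by auto
    have "transpose_mat (Z * X) $$ (i,j) = (Z * X) $$ (j,i)" using i j Zc Xc by simp
    also have "\<dots> = (Z * X) $$ (i,j)" unfolding ZXidx[OF i j] ZXidx[OF j i] by (simp add: ac_simps)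
    finally show "transpose_mat (Z * X) $$ (i,j) = (Z * X) $$ (i,j)" .
  qed (use Zc Xc in auto)
  have 4: "transpose_mat (X * Z) = X * Z"
    unfolding XZ by (rule eq_matI) (auto simp: E_def)
  show ?thesis unfolding pen_def Z_def[symmetric] X_def[symmetric]
    using 1 2 3 4 Xc Zc by auto
qed

lemma proj_orth: assumes p: "pen Z X" and Z: "Z \<in> carrier_mat n k" and y: "y \<in> carrier_vec n"
  and j: "j < k"
  shows "col Z j \<bullet> ((1\<^sub>m n - Z * X) *\<^sub>v y) = 0"
proof -
  have X: "X \<in> carrier_mat k n" using p Z unfolding pen_def by auto
  note pp = p[unfolded pen_def]
  have ZX: "Z * X \<in> carrier_mat n n" using Z X by auto
  have TZ: "transpose_mat Z \<in> carrier_mat k n" using Z by simp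
  have "transpose_mat Z * (Z * X) = transpose_mat Z * transpose_mat (Z * X)" using pp by simp
  also have "\<dots> = transpose_mat ((Z * X) * Z)" using transpose_mult[OF ZX Z] by simp
  also have "\<dots> = transpose_mat Z" using pp by simp
  finally have e: "transpose_mat Z * (Z * X) = transpose_mat Z" .
  have "transpose_mat Z * (1\<^sub>m n - Z * X) = transpose_mat Z * 1\<^sub>m n - transpose_mat Z * (Z * X)"
    by (rule mult_minus_distrib_mat[OF TZ one_carrier_mat ZX])
  also have "\<dots> = 0\<^sub>m k n" unfolding e right_mult_one_mat[OF TZ] by (rule minus_r_inv_mat[OF TZ])
  finally have M: "transpose_mat Z * (1\<^sub>m n - Z * X) = 0\<^sub>m k n" .
  have "transpose_mat Z *\<^sub>v ((1\<^sub>m n - Z * X) *\<^sub>v y) = (transpose_mat Z * (1\<^sub>m n - Z * X)) *\<^sub>v y"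
    by (rule assoc_mult_mat_vec[OF TZ minus_carrier_mat[OF ZX] y, symmetric])
  also have "\<dots> = 0\<^sub>v k" unfolding M by (rule eq_vecI) (use y in auto)
  finally have "(transpose_mat Z *\<^sub>v ((1\<^sub>m n - Z * X) *\<^sub>v y)) $ j = 0" using j by simp
  thus ?thesis using j Z by simp
qed


lemma vander:
  fixes lam x :: "nat \<Rightarrow> complex"
  assumes fin: "finite I" and inj: "inj_on lam I"
    and h: "\<And>k. (\<Sum>i\<in>I. lam i ^ k * x i) = 0" and i0: "i0 \<in> I"
  shows "x i0 = 0"
proof -
  define Q where "Q = (\<Prod>j\<in>I - {i0}. [:- lam j, 1:])"
  have pQ: "\<And>y. poly Q y = (\<Prod>j\<in>I - {i0}. (y - lam j))"
    unfolding Q_def poly_prod by simp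
  have "(\<Sum>i\<in>I. x i * poly Q (lam i)) = (\<Sum>i\<in>I. x i * (\<Sum>t\<le>degree Q. coeff Q t * lam i ^ t))"
    by (simp add: poly_altdef)
  also have "\<dots> = (\<Sum>t\<le>degree Q. coeff Q t * (\<Sum>i\<in>I. lam i ^ t * x i))"
    by (simp add: sum_distrib_left sum_distrib_right ac_simps sum.swap[of _ I])
  also have "\<dots> = 0" using h by simp
  finally have s0: "(\<Sum>i\<in>I. x i * poly Q (lam i)) = 0" .
  have "(\<Sum>i\<in>I. x i * poly Q (lam i)) = x i0 * poly Q (lam i0) + (\<Sum>i\<in>I - {i0}. x i * poly Q (lam i))"
    using fin i0 by (simp add: sum.remove)
  also have "(\<Sum>i\<in>I - {i0}. x i * poly Q (lam i)) = 0"
  proof (rule sum.neutral, rule ballI)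
    fix i assume "i \<in> I - {i0}"
    hence "poly Q (lam i) = 0" unfolding pQ using fin
      by (intro prod_zero) auto
    thus "x i * poly Q (lam i) = 0" by simp
  qed
  finally have "x i0 * poly Q (lam i0) = 0" using s0 by simp
  moreover have "poly Q (lam i0) \<noteq> 0" unfolding pQ using fin inj i0
    by (subst prod_zero_iff) (auto simp: inj_on_def)
  ultimately show ?thesis by simp
qed


lemma mv_idx: assumes "A \<in> carrier_mat a b" "dim_vec w = b" "i < a"
  shows "(A *\<^sub>v w) $ i = (\<Sum>s = 0..<b. A $$ (i,s) * w $ s)"
  using assms by (auto simp: scalar_prod_def intro!: sum.cong)

locale L =
  fixes S F :: "real mat" and \<theta>0 :: "real vec" and n\<theta> nx k1 k2 :: nat
    and \<rho> lam :: "nat \<Rightarrow> complex" and v :: "nat \<Rightarrow> complex vec"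
  assumes S: "S \<in> carrier_mat n\<theta> n\<theta>"
    and F: "F \<in> carrier_mat nx n\<theta>"
    and th: "\<theta>0 \<in> carrier_vec n\<theta>"
    and rho: "\<forall>i\<in>{1..k1+k2}. \<rho> i \<noteq> 0"
    and vdim: "\<forall>i\<in>{1..k1+k2}. v i \<in> carrier_vec n\<theta> \<and> v i \<noteq> 0\<^sub>v n\<theta>"
    and eig: "\<forall>i\<in>{1..k1+k2}. map_mat complex_of_real S *\<^sub>v v i = lam i \<cdot>\<^sub>v v i"
    and decomp: "\<forall>r<n\<theta>. complex_of_real (\<theta>0 $ r) = (\<Sum>i\<in>{1..k1+k2}. \<rho> i * (v i $ r))"
    and modes1: "\<forall>i\<in>{1..k1}. map_mat complex_of_real (pinv F * F) *\<^sub>v v i = v i"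
    and modes2: "\<forall>i\<in>{k1+1..k1+k2}. map_mat complex_of_real (pinv F * F) *\<^sub>v v i = 0\<^sub>v n\<theta>"
begin

abbreviation "Sc \<equiv> map_mat complex_of_real S"
abbreviation "Pc \<equiv> map_mat complex_of_real (pinv F * F)"

lemma Sc_carrier: "Sc \<in> carrier_mat n\<theta> n\<theta>" using S by simp

lemma eig_pow: assumes i: "i \<in> {1..k1+k2}" shows "Sc ^\<^sub>m k *\<^sub>v v i = lam i ^ k \<cdot>\<^sub>v v i"
proof (induction k)
  case 0
  then show ?case using vdim i S by auto
next
  case (Suc k)
  have vi: "v i \<in> carrier_vec n\<theta>" using vdim i by auto
  have "Sc ^\<^sub>m Suc k *\<^sub>v v i = (Sc ^\<^sub>m k * Sc) *\<^sub>v v i" by simp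
  also have "\<dots> = Sc ^\<^sub>m k *\<^sub>v (Sc *\<^sub>v v i)"
    by (rule assoc_mult_mat_vec[OF pow_carrier_mat[OF Sc_carrier] Sc_carrier vi])
  also have "\<dots> = Sc ^\<^sub>m k *\<^sub>v (lam i \<cdot>\<^sub>v v i)" using eig i by simp
  also have "\<dots> = lam i \<cdot>\<^sub>v (Sc ^\<^sub>m k *\<^sub>v v i)"
    by (rule mult_mat_vec[OF pow_carrier_mat[OF Sc_carrier] vi])
  also have "\<dots> = lam i ^ Suc k \<cdot>\<^sub>v v i" using Suc by (simp add: smult_smult_assoc)
  finally show ?case .
qed

lemma G_step: assumes I: "I \<subseteq> {1..k1+k2}"
  and h: "\<forall>r<n\<theta>. (\<Sum>i\<in>I. a i * v i $ r) = 0"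
  shows "\<forall>r<n\<theta>. (\<Sum>i\<in>I. (a i * lam i) * v i $ r) = 0"
proof (intro allI impI)
  fix r assume r: "r < n\<theta>"
  have e: "\<And>i. i \<in> I \<Longrightarrow> lam i * v i $ r = (\<Sum>s = 0..<n\<theta>. Sc $$ (r,s) * v i $ s)"
  proof -
    fix i assume "i \<in> I"
    hence i: "i \<in> {1..k1+k2}" using I by auto
    have vi: "dim_vec (v i) = n\<theta>" using vdim i by auto
    have "lam i * v i $ r = (Sc *\<^sub>v v i) $ r" using eig i vi r by simp
    also have "\<dots> = (\<Sum>s = 0..<n\<theta>. Sc $$ (r,s) * v i $ s)"
      using mv_idx[OF Sc_carrier vi r] r S by simp
    finally show "lam i * v i $ r = (\<Sum>s = 0..<n\<theta>. Sc $$ (r,s) * v i $ s)" .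
  qed
  have "(\<Sum>i\<in>I. (a i * lam i) * v i $ r) = (\<Sum>i\<in>I. a i * (\<Sum>s = 0..<n\<theta>. Sc $$ (r,s) * v i $ s))"
    by (rule sum.cong) (auto simp: e[symmetric] mult.assoc)
  also have "\<dots> = (\<Sum>s = 0..<n\<theta>. Sc $$ (r,s) * (\<Sum>i\<in>I. a i * v i $ s))"
    by (simp add: sum_distrib_left sum.swap[of _ I] ac_simps)
  also have "\<dots> = 0" using h by simp
  finally show "(\<Sum>i\<in>I. (a i * lam i) * v i $ r) = 0" .
qed

lemma eig_indep: assumes I: "I \<subseteq> {1..k1+k2}" and inj: "inj_on lam I"
  and h: "\<forall>r<n\<theta>. (\<Sum>i\<in>I. a i * v i $ r) = 0"
  and i0: "i0 \<in> I"
  shows "a i0 = 0"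
proof -
  have fin: "finite I" using I finite_subset by blast
  have hk: "\<forall>r<n\<theta>. (\<Sum>i\<in>I. (a i * lam i ^ k) * v i $ r) = 0" for k
  proof (induction k)
    case 0 then show ?case using h by simp
  next
    case (Suc k)
    from G_step[OF I Suc] show ?case by (simp add: ac_simps)
  qed
  have "\<forall>r<n\<theta>. a i0 * v i0 $ r = 0"
  proof (intro allI impI)
    fix r assume r: "r < n\<theta>"
    show "a i0 * v i0 $ r = 0"
      by (rule vander[OF fin inj _ i0, of "\<lambda>i. a i * v i $ r"])
         (use hk r in \<open>simp add: ac_simps\<close>)
  qed
  moreover obtain r where "r < n\<theta>" "v i0 $ r \<noteq> 0"
    using vdim i0 I by (metis (no_types, lifting) carrier_vecD eq_vecI index_zero_vec(1,2) subsetD)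
  ultimately show ?thesis by fastforce
qed

lemma Mc_v: assumes dP: "dim_row (pinv F) = n\<theta>" and i: "i \<in> {1..k1+k2}"
  shows "(Pc * Sc ^\<^sub>m k * (Sc - 1\<^sub>m n\<theta>)) *\<^sub>v v i
     = (lam i ^ k * (lam i - 1)) \<cdot>\<^sub>v (Pc *\<^sub>v v i)"
proof -
  have Pcar: "Pc \<in> carrier_mat n\<theta> n\<theta>" using dP F by auto
  have vi: "v i \<in> carrier_vec n\<theta>" using vdim i by auto
  have Sk: "Sc ^\<^sub>m k \<in> carrier_mat n\<theta> n\<theta>" using Sc_carrier by simp
  have S1: "Sc - 1\<^sub>m n\<theta> \<in> carrier_mat n\<theta> n\<theta>" using minus_carrier_mat[OF one_carrier_mat] by blast
  have "(Sc - 1\<^sub>m n\<theta>) *\<^sub>v v i = Sc *\<^sub>v v i - 1\<^sub>m n\<theta> *\<^sub>v v i"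
    by (rule minus_mult_distrib_mat_vec[OF Sc_carrier one_carrier_mat vi])
  also have "\<dots> = (lam i - 1) \<cdot>\<^sub>v v i" using eig i vi
    by (intro eq_vecI) (auto simp: algebra_simps)
  finally have e1: "(Sc - 1\<^sub>m n\<theta>) *\<^sub>v v i = (lam i - 1) \<cdot>\<^sub>v v i" .
  have "(Pc * Sc ^\<^sub>m k * (Sc - 1\<^sub>m n\<theta>)) *\<^sub>v v i = (Pc * Sc ^\<^sub>m k) *\<^sub>v ((Sc - 1\<^sub>m n\<theta>) *\<^sub>v v i)"
    by (rule assoc_mult_mat_vec[OF mult_carrier_mat[OF Pcar Sk] S1 vi])
  also have "\<dots> = Pc *\<^sub>v (Sc ^\<^sub>m k *\<^sub>v ((lam i - 1) \<cdot>\<^sub>v v i))"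
    unfolding e1 by (rule assoc_mult_mat_vec[OF Pcar Sk]) (use vi in simp)
  also have "Sc ^\<^sub>m k *\<^sub>v ((lam i - 1) \<cdot>\<^sub>v v i) = (lam i ^ k * (lam i - 1)) \<cdot>\<^sub>v v i"
    using mult_mat_vec[OF Sk vi] eig_pow[OF i] by (simp add: smult_smult_assoc ac_simps)
  also have "Pc *\<^sub>v ((lam i ^ k * (lam i - 1)) \<cdot>\<^sub>v v i) = (lam i ^ k * (lam i - 1)) \<cdot>\<^sub>v (Pc *\<^sub>v v i)"
    by (rule mult_mat_vec[OF Pcar vi])
  finally show ?thesis .
qed

lemma ycomp: assumes dP: "dim_row (pinv F) = n\<theta>" and r: "r < n\<theta>"
  shows "complex_of_real (yv S F \<theta>0 n $ r)
     = (\<Sum>i\<in>{1..k1}. \<rho> i * (lam i ^ (n-1) * (lam i - 1)) * v i $ r)"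
proof -
  define P where "P = pinv F * F"
  have Pcar: "P \<in> carrier_mat n\<theta> n\<theta>" using dP F unfolding P_def by auto
  define M where "M = P * S ^\<^sub>m (n-1) * (S - 1\<^sub>m n\<theta>)"
  have Sk: "S ^\<^sub>m (n-1) \<in> carrier_mat n\<theta> n\<theta>" using S by simp
  have S1: "S - 1\<^sub>m n\<theta> \<in> carrier_mat n\<theta> n\<theta>" using minus_carrier_mat[OF one_carrier_mat] by blast
  have Mcar: "M \<in> carrier_mat n\<theta> n\<theta>" unfolding M_def using Pcar Sk S1 by auto
  have y: "yv S F \<theta>0 n = M *\<^sub>v \<theta>0" unfolding yv_def M_def P_def using S by simp
  define Mc where "Mc = map_mat complex_of_real M"
  have hm: "map_mat complex_of_real (S - 1\<^sub>m n\<theta>) = Sc - 1\<^sub>m n\<theta>"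
    using S by (intro eq_matI) auto
  have Mc: "Mc = Pc * Sc ^\<^sub>m (n-1) * (Sc - 1\<^sub>m n\<theta>)"
    unfolding Mc_def M_def P_def[symmetric]
    by (simp only: of_real_hom.mat_hom_mult[OF mult_carrier_mat[OF Pcar Sk] S1]
      of_real_hom.mat_hom_mult[OF Pcar Sk] of_real_hom.mat_hom_pow[OF S] hm)
  have Mccar: "Mc \<in> carrier_mat n\<theta> n\<theta>" using Mcar unfolding Mc_def by simp
  have "complex_of_real (yv S F \<theta>0 n $ r) = (map_vec complex_of_real (M *\<^sub>v \<theta>0)) $ r"
    using y r Mcar by simp
  also have "\<dots> = (Mc *\<^sub>v map_vec complex_of_real \<theta>0) $ r"
    unfolding Mc_def by (simp only: of_real_hom.mult_mat_vec_hom[OF Mcar th])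
  also have "\<dots> = (\<Sum>s = 0..<n\<theta>. Mc $$ (r,s) * (\<Sum>i\<in>{1..k1+k2}. \<rho> i * (v i $ s)))"
    using mv_idx[OF Mccar _ r, of "map_vec complex_of_real \<theta>0"] th decomp by simp
  also have "\<dots> = (\<Sum>i\<in>{1..k1+k2}. \<rho> i * (\<Sum>s = 0..<n\<theta>. Mc $$ (r,s) * v i $ s))"
    by (simp add: sum_distrib_left ac_simps) (rule sum.swap)
  also have "\<dots> = (\<Sum>i\<in>{1..k1+k2}. \<rho> i * (lam i ^ (n-1) * (lam i - 1)) * (Pc *\<^sub>v v i) $ r)"
  proof (rule sum.cong[OF refl])
    fix i assume i: "i \<in> {1..k1+k2}"
    have vi: "dim_vec (v i) = n\<theta>" using vdim i by auto
    have "(\<Sum>s = 0..<n\<theta>. Mc $$ (r,s) * v i $ s) = (Mc *\<^sub>v v i) $ r"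
      using mv_idx[OF Mccar vi r] by simp
    also have "\<dots> = (lam i ^ (n-1) * (lam i - 1)) * (Pc *\<^sub>v v i) $ r"
      unfolding Mc Mc_v[OF dP i] using r dP F by simp
    finally show "\<rho> i * (\<Sum>s = 0..<n\<theta>. Mc $$ (r,s) * v i $ s)
       = \<rho> i * (lam i ^ (n-1) * (lam i - 1)) * (Pc *\<^sub>v v i) $ r" by simp
  qed
  also have "\<dots> = (\<Sum>i\<in>{1..k1}. \<rho> i * (lam i ^ (n-1) * (lam i - 1)) * (Pc *\<^sub>v v i) $ r)
     + (\<Sum>i\<in>{k1+1..k1+k2}. \<rho> i * (lam i ^ (n-1) * (lam i - 1)) * (Pc *\<^sub>v v i) $ r)"
  proof -
    have "{1..k1+k2} = {1..k1} \<union> {k1+1..k1+k2}" by auto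
    thus ?thesis by (simp add: sum.union_disjoint)
  qed
  also have "(\<Sum>i\<in>{k1+1..k1+k2}. \<rho> i * (lam i ^ (n-1) * (lam i - 1)) * (Pc *\<^sub>v v i) $ r) = 0"
    using modes2 r by simp
  also have "(\<Sum>i\<in>{1..k1}. \<rho> i * (lam i ^ (n-1) * (lam i - 1)) * (Pc *\<^sub>v v i) $ r)
     = (\<Sum>i\<in>{1..k1}. \<rho> i * (lam i ^ (n-1) * (lam i - 1)) * v i $ r)"
    using modes1 by simp
  finally show ?thesis by simp
qed

end

lemma zs_len: "length (zs S F th l) = Suc l"
  by (induction l) (auto simp: Let_def)

lemma zs_nth: "i \<le> l \<Longrightarrow> zs S F th l ! i = last (zs S F th i)"
proof (induction l)
  case 0 thus ?case by simp
next
  case (Suc l)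
  show ?case
  proof (cases "i \<le> l")
    case True
    thus ?thesis using Suc zs_len[of S F th l] by (simp add: Let_def nth_append)
  next
    case False
    hence "i = Suc l" using Suc by simp
    thus ?thesis using zs_len[of S F th l] by (simp add: Let_def nth_append)
  qed
qed

lemma yv_dim: "dim_vec (yv S F th n) = dim_row (pinv F)"
  unfolding yv_def by simp

lemma zs_ortho: assumes d: "dim_row (pinv F) = dim_vec th"
  shows "ortho (dim_vec th) (zs S F th l)"
proof (induction l)
  case 0
  have "yv S F th 1 \<in> carrier_vec (dim_vec th)" by (rule carrier_vecI) (simp only: yv_dim d)
  thus ?case unfolding ortho_def by simp
next
  case (Suc l)
  define N where "N = dim_vec th"
  define zl where "zl = zs S F th l"
  define Z where "Z = mat_of_cols N zl"
  define y where "y = yv S F th (l + 2)"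
  define z where "z = (1\<^sub>m N - Z * pinv Z) *\<^sub>v y"
  have o: "ortho N zl" using Suc unfolding N_def zl_def .
  have pe: "pinv (mat_of_cols N zl) = pX N zl" by (rule pinv_eq[OF pen_ortho[OF o]])
  have p: "pen Z (pinv Z)" unfolding Z_def pe by (rule pen_ortho[OF o])
  have len: "length zl = Suc l" unfolding zl_def by (rule zs_len)
  have Zc: "Z \<in> carrier_mat N (Suc l)" unfolding Z_def using mat_of_cols_carrier(1)[of N zl] len by simp
  have Xc: "pinv Z \<in> carrier_mat (Suc l) N"
  proof -
    have "pinv Z \<in> carrier_mat (dim_col Z) (dim_row Z)" using p unfolding pen_def by blast
    thus ?thesis using Zc by simp
  qed
  have yc: "y \<in> carrier_vec N" unfolding y_def N_def by (rule carrier_vecI) (simp only: yv_dim d)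
  have zc: "z \<in> carrier_vec N" unfolding z_def using Zc by (intro carrier_vecI) simp
  have eq: "zs S F th (Suc l) = zl @ [z]"
    unfolding zl_def z_def Z_def y_def N_def by (simp only: zs.simps Let_def)
  have orth1: "zl ! i \<bullet> z = 0" if i: "i < Suc l" for i
  proof -
    have zi: "zl ! i \<in> carrier_vec N" using o i len unfolding ortho_def by auto
    have c: "col Z i = zl ! i" unfolding Z_def using i len zi by (intro col_mat_of_cols) auto
    have "col Z i \<bullet> z = 0" unfolding z_def by (rule proj_orth[OF p Zc yc i])
    thus ?thesis unfolding c .
  qed
  have orth2: "z \<bullet> zl ! i = 0" if i: "i < Suc l" for i
  proof -
    have zi: "zl ! i \<in> carrier_vec N" using o i len unfolding ortho_def by auto
    show ?thesis using orth1[OF i] comm_scalar_prod[OF zi zc] by argo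
  qed
  show ?case unfolding eq N_def[symmetric] ortho_def
  proof (intro conjI allI impI)
    show "set (zl @ [z]) \<subseteq> carrier_vec N" using o zc unfolding ortho_def by auto
  next
    fix i j assume i: "i < length (zl @ [z])" and j: "j < length (zl @ [z])" and ij: "i \<noteq> j"
    show "(zl @ [z]) ! i \<bullet> (zl @ [z]) ! j = 0"
    proof (cases "i < Suc l")
      case ci: True
      show ?thesis
      proof (cases "j < Suc l")
        case True thus ?thesis using ci o ij len unfolding ortho_def by (simp add: nth_append)
      next
        case False hence "j = Suc l" using j len by simp
        thus ?thesis using ci orth1 len by (simp add: nth_append)
      qed
    next
      case False hence ii: "i = Suc l" using i len by simp
      hence "j < Suc l" using j ij len by simp
      thus ?thesis using ii orth2 len by (simp add: nth_append)
    qed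
  qed
qed


lemma zv_orth: assumes d: "dim_row (pinv F) = dim_vec th" and ij: "i \<noteq> j"
  shows "zv S F th i \<bullet> zv S F th j = 0"
proof -
  define L where "L = max i j"
  have "zv S F th i = zs S F th L ! i" "zv S F th j = zs S F th L ! j"
    unfolding zv_def L_def by (auto simp: zs_nth)
  moreover have "i < length (zs S F th L)" "j < length (zs S F th L)"
    unfolding zs_len L_def by auto
  ultimately show ?thesis using zs_ortho[OF d, of S L] ij unfolding ortho_def by auto
qed

lemma pinvZ: assumes d: "dim_row (pinv F) = dim_vec th"
  shows "pinv (Zmat S F th k) \<in> carrier_mat (Suc k) (dim_vec th)"
proof -
  have o: "ortho (dim_vec th) (zs S F th k)" by (rule zs_ortho[OF d])
  have "pinv (Zmat S F th k) = pX (dim_vec th) (zs S F th k)"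
    unfolding Zmat_def by (rule pinv_eq[OF pen_ortho[OF o]])
  thus ?thesis by (simp add: pX_def zs_len)
qed

lemma Ycols_len: "length (Ycols S F th n) = n - 1"
  by (induction S F th n rule: Ycols.induct) auto

lemma Ycols_car: assumes d: "dim_row (pinv F) = dim_vec th"
  shows "set (Ycols S F th n) \<subseteq> carrier_vec (dim_vec th)"
proof (induction n rule: less_induct)
  case (less n)
  show ?case
  proof (cases n)
    case (Suc m)
    show ?thesis
    proof (cases m)
      case (Suc m2)
      show ?thesis
      proof (cases m2)
        case 0
        have "yv S F th 2 \<in> carrier_vec (dim_vec th)" by (rule carrier_vecI) (simp only: yv_dim d)
        thus ?thesis using \<open>n = Suc m\<close> Suc 0 by (simp add: numeral_2_eq_2)
      next
        case (Suc k)
        have "set (Ycols S F th (Suc (Suc k))) \<subseteq> carrier_vec (dim_vec th)"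
          using less \<open>n = Suc m\<close> \<open>m = Suc m2\<close> Suc by simp
        thus ?thesis using \<open>n = Suc m\<close> \<open>m = Suc m2\<close> Suc by (auto intro!: carrier_vecI)
      qed
    qed (use \<open>n = Suc m\<close> in simp)
  qed simp
qed

lemma Ycols_Suc: "t < length (Ycols S F th n) \<Longrightarrow> Ycols S F th (Suc n) ! t = Ycols S F th n ! t"
proof (cases n)
  case (Suc m) assume t: "t < length (Ycols S F th n)"
  show ?thesis
  proof (cases m)
    case (Suc k) thus ?thesis using t \<open>n = Suc m\<close> by (simp add: nth_append)
  qed (use t Suc in simp)
qed simp

lemma Ycols_prefix: "a \<le> b \<Longrightarrow> t < length (Ycols S F th a) \<Longrightarrow> Ycols S F th b ! t = Ycols S F th a ! t"
proof (induction b)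
  case 0 thus ?case by simp
next
  case (Suc b)
  show ?case
  proof (cases "a = Suc b")
    case False
    hence "a \<le> b" using Suc by simp
    moreover hence "t < length (Ycols S F th b)" using Suc(3) by (simp add: Ycols_len)
    ultimately show ?thesis using Suc Ycols_Suc by metis
  qed simp
qed


definition wcol :: "real mat \<Rightarrow> real mat \<Rightarrow> real vec \<Rightarrow> nat \<Rightarrow> real vec" where
  "wcol S F th j = (if j = 0 then yv S F th 1 else Ycols S F th (j+1) ! (j-1))"

lemma aux_sum:
  fixes g a c :: "nat \<Rightarrow> complex" and b :: "nat \<Rightarrow> nat \<Rightarrow> complex"
  shows "(\<Sum>i\<in>I. g i * (a i - (\<Sum>s\<in>T. c s * b s i)))
     = (\<Sum>i\<in>I. g i * a i) - (\<Sum>s\<in>T. (\<Sum>i\<in>I. g i * b s i) * c s)"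
proof -
  have "(\<Sum>i\<in>I. g i * (\<Sum>s\<in>T. c s * b s i)) = (\<Sum>i\<in>I. \<Sum>s\<in>T. g i * b s i * c s)"
    by (simp add: sum_distrib_left mult_ac)
  also have "\<dots> = (\<Sum>s\<in>T. \<Sum>i\<in>I. g i * b s i * c s)" by (rule sum.swap)
  also have "\<dots> = (\<Sum>s\<in>T. (\<Sum>i\<in>I. g i * b s i) * c s)" by (simp add: sum_distrib_right)
  finally show ?thesis by (simp add: right_diff_distrib sum_subtractf)
qed

context L begin

definition goodp :: "nat \<Rightarrow> complex poly \<Rightarrow> bool" where
  "goodp j p \<longleftrightarrow> degree p \<le> j \<and> coeff p j = 1 \<and>
     (\<forall>r<n\<theta>. complex_of_real (wcol S F \<theta>0 j $ r)
        = (\<Sum>i\<in>{1..k1}. \<rho> i * (lam i - 1) * poly p (lam i) * v i $ r))"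

lemma y_poly: assumes dP: "dim_row (pinv F) = n\<theta>" and r: "r < n\<theta>"
  shows "complex_of_real (yv S F \<theta>0 (Suc k) $ r)
     = (\<Sum>i\<in>{1..k1}. \<rho> i * (lam i - 1) * poly (monom 1 k) (lam i) * v i $ r)"
  unfolding ycomp[OF dP r] by (simp add: poly_monom ac_simps)

lemma wgood: assumes dP: "dim_row (pinv F) = n\<theta>"
  shows "\<exists>p. goodp j p"
proof (induction j rule: less_induct)
  case (less j)
  have dth: "dim_vec \<theta>0 = n\<theta>" using th by auto
  have d: "dim_row (pinv F) = dim_vec \<theta>0" using dP dth by simp
  show ?case
  proof (cases j)
    case 0
    show ?thesis
      by (rule exI[of _ "monom 1 0"]) (use y_poly[OF dP, of _ 0] 0 in \<open>simp add: goodp_def wcol_def degree_monom_le\<close>)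
  next
    case (Suc j1)
    show ?thesis
    proof (cases j1)
      case 0
      show ?thesis
        by (rule exI[of _ "monom 1 1"]) (use y_poly[OF dP, of _ 1] 0 \<open>j = Suc j1\<close> in
          \<open>simp add: goodp_def wcol_def degree_monom_le numeral_2_eq_2\<close>)
    next
      case (Suc k)
      have j: "j = Suc (Suc k)" using \<open>j = Suc j1\<close> Suc by simp
      have "\<forall>s\<in>{..<j}. \<exists>p. goodp s p" using less by auto
      then obtain P where P: "\<And>s. s < j \<Longrightarrow> goodp s (P s)" using bchoice by (metis lessThan_iff)
      define Y where "Y = mat_of_cols n\<theta> (Ycols S F \<theta>0 (Suc (Suc k)))"
      define X where "X = pinv (Zmat S F \<theta>0 k)"
      define y2 where "y2 = yv S F \<theta>0 (k + 2)"
      define e where "e = X *\<^sub>v y2"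
      have Yc: "Y \<in> carrier_mat n\<theta> (Suc k)" unfolding Y_def
        using mat_of_cols_carrier(1)[of n\<theta> "Ycols S F \<theta>0 (Suc (Suc k))"] Ycols_len[of S F \<theta>0 "Suc (Suc k)"]
        by simp
      have Xc: "X \<in> carrier_mat (Suc k) n\<theta>" unfolding X_def using pinvZ[OF d, of S k] dth by simp
      have y2c: "y2 \<in> carrier_vec n\<theta>" unfolding y2_def by (rule carrier_vecI) (simp only: yv_dim dP)
      have ec: "e \<in> carrier_vec (Suc k)" unfolding e_def using Xc y2c by simp
      have wj: "wcol S F \<theta>0 j = yv S F \<theta>0 (k + 3) - (Y * X) *\<^sub>v y2"
        unfolding wcol_def j Y_def X_def y2_def using Ycols_len[of S F \<theta>0 "Suc (Suc k)"] dth
        by (simp add: nth_append numeral_3_eq_3 numeral_2_eq_2)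
      have Yidx: "Y $$ (r, s) = wcol S F \<theta>0 (Suc s) $ r" if r: "r < n\<theta>" and s: "s < Suc k" for r s
      proof -
        have "Y $$ (r,s) = Ycols S F \<theta>0 (Suc (Suc k)) ! s $ r"
          unfolding Y_def mat_of_cols_def using r s Ycols_len[of S F \<theta>0 "Suc (Suc k)"] by simp
        also have "Ycols S F \<theta>0 (Suc (Suc k)) ! s = Ycols S F \<theta>0 (Suc (Suc s)) ! s"
          by (rule Ycols_prefix) (use s in \<open>auto simp: Ycols_len\<close>)
        finally show ?thesis unfolding wcol_def by simp
      qed
      define p where "p = monom 1 (Suc (Suc k)) - (\<Sum>s<Suc k. smult (complex_of_real (e $ s)) (P (Suc s)))"
      have Ps: "goodp (Suc s) (P (Suc s))" if "s < Suc k" for s using P[of "Suc s"] that j by simp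
      have degsum: "degree (\<Sum>s<Suc k. smult (complex_of_real (e $ s)) (P (Suc s))) \<le> Suc k"
      proof (rule degree_sum_le)
        fix s assume "s \<in> {..<Suc k}"
        hence "degree (P (Suc s)) \<le> Suc k" using Ps[of s] unfolding goodp_def by auto
        thus "degree (smult (complex_of_real (e $ s)) (P (Suc s))) \<le> Suc k"
          using degree_smult_le order_trans by blast
      qed simp
      have "degree p \<le> Suc (Suc k)" unfolding p_def
        using degree_diff_le[OF degree_monom_le] degsum by (meson le_Suc_eq degree_diff_le degree_monom_le order_trans)
      moreover have "coeff p (Suc (Suc k)) = 1"
      proof -
        have "coeff (\<Sum>s<Suc k. smult (complex_of_real (e $ s)) (P (Suc s))) (Suc (Suc k)) = 0"
          by (rule coeff_eq_0) (use degsum in simp)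
        thus ?thesis unfolding p_def by simp
      qed
      moreover have "\<forall>r<n\<theta>. complex_of_real (wcol S F \<theta>0 j $ r)
        = (\<Sum>i\<in>{1..k1}. \<rho> i * (lam i - 1) * poly p (lam i) * v i $ r)"
      proof (intro allI impI)
        fix r assume r: "r < n\<theta>"
        have "(Y * X) *\<^sub>v y2 = Y *\<^sub>v e" unfolding e_def by (rule assoc_mult_mat_vec[OF Yc Xc y2c])
        hence "wcol S F \<theta>0 j $ r = yv S F \<theta>0 (k + 3) $ r - (Y *\<^sub>v e) $ r"
          unfolding wj using r Yc by simp
        also have "(Y *\<^sub>v e) $ r = (\<Sum>s = 0..<Suc k. Y $$ (r,s) * e $ s)"
          using mv_idx[OF Yc _ r, of e] ec by simp
        also have "\<dots> = (\<Sum>s<Suc k. wcol S F \<theta>0 (Suc s) $ r * e $ s)"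
          using Yidx[OF r] by (simp add: atLeast0LessThan)
        finally have w: "complex_of_real (wcol S F \<theta>0 j $ r) = complex_of_real (yv S F \<theta>0 (Suc (Suc (Suc k))) $ r)
            - (\<Sum>s<Suc k. complex_of_real (wcol S F \<theta>0 (Suc s) $ r) * complex_of_real (e $ s))"
          by (simp add: numeral_3_eq_3)
        also have "\<dots> = (\<Sum>i\<in>{1..k1}. \<rho> i * (lam i - 1) * poly (monom 1 (Suc (Suc k))) (lam i) * v i $ r)
          - (\<Sum>s<Suc k. (\<Sum>i\<in>{1..k1}. \<rho> i * (lam i - 1) * poly (P (Suc s)) (lam i) * v i $ r) * complex_of_real (e $ s))"
          using y_poly[OF dP r, of "Suc (Suc k)"] Ps r unfolding goodp_def by simp
        also have "\<dots> = (\<Sum>i\<in>{1..k1}. \<rho> i * (lam i - 1) * poly p (lam i) * v i $ r)"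
        proof -
          have "(\<Sum>i\<in>{1..k1}. \<rho> i * (lam i - 1) * poly p (lam i) * v i $ r)
            = (\<Sum>i\<in>{1..k1}. (\<rho> i * (lam i - 1) * v i $ r) * (poly (monom 1 (Suc (Suc k))) (lam i)
                 - (\<Sum>s<Suc k. complex_of_real (e $ s) * poly (P (Suc s)) (lam i))))"
            unfolding p_def poly_diff poly_sum by (simp add: mult_ac)
          also have "\<dots> = (\<Sum>i\<in>{1..k1}. (\<rho> i * (lam i - 1) * v i $ r) * poly (monom 1 (Suc (Suc k))) (lam i))
             - (\<Sum>s<Suc k. (\<Sum>i\<in>{1..k1}. (\<rho> i * (lam i - 1) * v i $ r) * poly (P (Suc s)) (lam i)) * complex_of_real (e $ s))"
            by (rule aux_sum)
          finally show ?thesis by (simp add: mult_ac)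
        qed
        finally show "complex_of_real (wcol S F \<theta>0 j $ r)
          = (\<Sum>i\<in>{1..k1}. \<rho> i * (lam i - 1) * poly p (lam i) * v i $ r)" .
      qed
      ultimately show ?thesis unfolding goodp_def j by blast
    qed
  qed
qed

end

context L begin

lemma part2:
  assumes dP: "dim_row (pinv F) = n\<theta>"
    and inj: "inj_on lam {1..k1+k2}" and l1: "\<forall>i\<in>{1..k1}. lam i \<noteq> 1"
    and n: "1 \<le> n" and m: "1 \<le> m" "m \<le> min n k1"
    and c: "c \<in> carrier_vec m"
    and W: "mat_of_cols n\<theta> (take m (cols (Wmat S F \<theta>0 n))) *\<^sub>v c = 0\<^sub>v n\<theta>"
  shows "c = 0\<^sub>v m"
proof (rule ccontr)
  assume cn: "c \<noteq> 0\<^sub>v m"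
  have dth: "dim_vec \<theta>0 = n\<theta>" using th by auto
  have d: "dim_row (pinv F) = dim_vec \<theta>0" using dP dth by simp
  define wl where "wl = yv S F \<theta>0 1 # Ycols S F \<theta>0 n"
  have y1c: "yv S F \<theta>0 1 \<in> carrier_vec n\<theta>" by (rule carrier_vecI) (simp only: yv_dim dP)
  have wlc: "set wl \<subseteq> carrier_vec n\<theta>" unfolding wl_def using Ycols_car[OF d, of S n] y1c dth by auto
  have cols: "cols (Wmat S F \<theta>0 n) = wl" unfolding Wmat_def wl_def[symmetric] dth
    by (rule cols_mat_of_cols[OF wlc])
  have lenwl: "length wl = n" unfolding wl_def using Ycols_len[of S F \<theta>0 n] n by simp
  define W where "W = mat_of_cols n\<theta> (take m wl)"
  have Wc: "W \<in> carrier_mat n\<theta> m" unfolding W_def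
    using mat_of_cols_carrier(1)[of n\<theta> "take m wl"] lenwl m by simp
  have wnth: "take m wl ! j = wcol S F \<theta>0 j" if j: "j < m" for j
  proof (cases j)
    case 0 thus ?thesis unfolding wl_def wcol_def using j by simp
  next
    case (Suc t)
    have "take m wl ! j = Ycols S F \<theta>0 n ! t" unfolding wl_def using j Suc by simp
    also have "\<dots> = Ycols S F \<theta>0 (Suc (Suc t)) ! t"
      by (rule Ycols_prefix) (use j Suc m in \<open>auto simp: Ycols_len\<close>)
    finally show ?thesis unfolding wcol_def using Suc by simp
  qed
  have Widx: "W $$ (r,j) = wcol S F \<theta>0 j $ r" if "r < n\<theta>" "j < m" for r j
    unfolding W_def mat_of_cols_def using that lenwl m wnth by simp
  obtain P where P: "\<And>j. goodp j (P j)" using wgood[OF dP] by metis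
  define q where "q = (\<Sum>j<m. smult (complex_of_real (c $ j)) (P j))"
  have zero: "\<forall>r<n\<theta>. (\<Sum>i\<in>{1..k1}. (\<rho> i * (lam i - 1) * poly q (lam i)) * v i $ r) = 0"
  proof (intro allI impI)
    fix r assume r: "r < n\<theta>"
    have "(W *\<^sub>v c) $ r = 0" using W r unfolding W_def cols by simp
    hence "(\<Sum>j = 0..<m. W $$ (r,j) * c $ j) = 0" using mv_idx[OF Wc _ r, of c] c by simp
    hence "(\<Sum>j<m. wcol S F \<theta>0 j $ r * c $ j) = 0" using Widx[OF r] by (simp add: atLeast0LessThan)
    hence "(\<Sum>j<m. complex_of_real (wcol S F \<theta>0 j $ r) * complex_of_real (c $ j)) = 0"
      by (metis (no_types, lifting) of_real_0 of_real_mult of_real_sum sum.cong)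
    hence "(\<Sum>j<m. (\<Sum>i\<in>{1..k1}. \<rho> i * (lam i - 1) * poly (P j) (lam i) * v i $ r) * complex_of_real (c $ j)) = 0"
      using P r unfolding goodp_def by simp
    moreover have "(\<Sum>j<m. (\<Sum>i\<in>{1..k1}. \<rho> i * (lam i - 1) * poly (P j) (lam i) * v i $ r) * complex_of_real (c $ j))
        = (\<Sum>i\<in>{1..k1}. (\<rho> i * (lam i - 1) * poly q (lam i)) * v i $ r)"
      unfolding q_def poly_sum
      by (simp add: sum_distrib_left sum_distrib_right mult_ac) (rule sum.swap)
    ultimately show "(\<Sum>i\<in>{1..k1}. (\<rho> i * (lam i - 1) * poly q (lam i)) * v i $ r) = 0" by simp
  qed
  have roots: "poly q (lam i) = 0" if i: "i \<in> {1..k1}" for i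
  proof -
    have "\<rho> i * (lam i - 1) * poly q (lam i) = 0"
      by (rule eig_indep[OF _ _ zero i]) (use inj in \<open>auto intro: inj_on_subset\<close>)
    moreover have "\<rho> i \<noteq> 0" using rho i by auto
    moreover have "lam i - 1 \<noteq> 0" using l1 i by auto
    ultimately show ?thesis by simp
  qed
  obtain j0 where j0: "j0 < m" "c $ j0 \<noteq> 0" using cn c by (metis carrier_vecD eq_vecI index_zero_vec(1,2))
  define J where "J = Max {j. j < m \<and> c $ j \<noteq> 0}"
  have finJ: "finite {j. j < m \<and> c $ j \<noteq> 0}" by simp
  have "J \<in> {j. j < m \<and> c $ j \<noteq> 0}" unfolding J_def by (rule Max_in[OF finJ]) (use j0 in auto)
  hence J: "J < m" "c $ J \<noteq> 0" by auto
  have Jmax: "\<And>j. j < m \<Longrightarrow> c $ j \<noteq> 0 \<Longrightarrow> j \<le> J" unfolding J_def using finJ by auto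
  have "coeff q J = (\<Sum>j<m. complex_of_real (c $ j) * coeff (P j) J)"
    unfolding q_def coeff_sum by simp
  also have "\<dots> = (\<Sum>j\<in>{J}. complex_of_real (c $ j) * coeff (P j) J)"
  proof (rule sum.mono_neutral_right)
    show "\<forall>j\<in>{..<m} - {J}. complex_of_real (c $ j) * coeff (P j) J = 0"
    proof
      fix j assume jj: "j \<in> {..<m} - {J}"
      show "complex_of_real (c $ j) * coeff (P j) J = 0"
      proof (cases "j < J")
        case True
        hence "coeff (P j) J = 0" using P[of j] unfolding goodp_def by (intro coeff_eq_0) auto
        thus ?thesis by simp
      next
        case False
        hence "c $ j = 0" using Jmax jj by fastforce
        thus ?thesis by simp
      qed
    qed
  qed (use J in auto)
  also have "\<dots> = complex_of_real (c $ J)" using P[of J] unfolding goodp_def by simp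
  finally have "coeff q J \<noteq> 0" using J by simp
  hence qn: "q \<noteq> 0" by auto
  have degq: "degree q \<le> m - 1" unfolding q_def
  proof (rule degree_sum_le)
    fix j assume "j \<in> {..<m}"
    hence "degree (P j) \<le> m - 1" using P[of j] unfolding goodp_def by auto
    thus "degree (smult (complex_of_real (c $ j)) (P j)) \<le> m - 1"
      using degree_smult_le order_trans by blast
  qed simp
  have "lam ` {1..k1} \<subseteq> {x. poly q x = 0}" using roots by auto
  hence "card (lam ` {1..k1}) \<le> card {x. poly q x = 0}"
    by (rule card_mono[OF poly_roots_finite[OF qn]])
  also have "\<dots> \<le> degree q" by (rule card_poly_roots_bound[OF qn])
  finally have "card (lam ` {1..k1}) \<le> m - 1" using degq by simp
  moreover have "card (lam ` {1..k1}) = k1"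
    using card_image[OF inj_on_subset[OF inj]] by auto
  ultimately show False using m by (simp add: min_def split: if_splits)
qed

end

lemma mv0: "A *\<^sub>v 0\<^sub>v k = 0\<^sub>v (dim_row A)"
  by (rule eq_vecI) (auto simp: scalar_prod_def)

lemma degen_zero: assumes "\<theta>0 = 0\<^sub>v N" and "x \<in> set (zs S F \<theta>0 l)"
  shows "\<exists>k. x = 0\<^sub>v k"
  using assms(2)
proof (induction l arbitrary: x)
  case 0 thus ?case using assms by (auto simp: yv_def mv0)
next
  case (Suc l)
  thus ?case using assms by (auto simp: Let_def yv_def mv0)
qed

theorem lemma1:
  fixes S F :: "real mat" and \<theta>0 :: "real vec" and n\<theta> nx k1 k2 :: nat
    and \<rho> lam :: "nat \<Rightarrow> complex" and v :: "nat \<Rightarrow> complex vec"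
  assumes S: "S \<in> carrier_mat n\<theta> n\<theta>"
    and F: "F \<in> carrier_mat nx n\<theta>"
    and th: "\<theta>0 \<in> carrier_vec n\<theta>"
    and rho: "\<forall>i\<in>{1..k1+k2}. \<rho> i \<noteq> 0"
    and vdim: "\<forall>i\<in>{1..k1+k2}. v i \<in> carrier_vec n\<theta> \<and> v i \<noteq> 0\<^sub>v n\<theta>"
    and eig: "\<forall>i\<in>{1..k1+k2}. map_mat complex_of_real S *\<^sub>v v i = lam i \<cdot>\<^sub>v v i"
    and decomp: "\<forall>r<n\<theta>. complex_of_real (\<theta>0 $ r) = (\<Sum>i\<in>{1..k1+k2}. \<rho> i * (v i $ r))"
    and modes1: "\<forall>i\<in>{1..k1}. map_mat complex_of_real (pinv F * F) *\<^sub>v v i = v i"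
    and modes2: "\<forall>i\<in>{k1+1..k1+k2}. map_mat complex_of_real (pinv F * F) *\<^sub>v v i = 0\<^sub>v n\<theta>"
  shows "(\<forall>l i j. i \<le> l \<and> j \<le> l \<and> i \<noteq> j \<longrightarrow> zv S F \<theta>0 i \<bullet> zv S F \<theta>0 j = 0)
       \<and> ((inj_on lam {1..k1+k2} \<and> (\<forall>i\<in>{1..k1}. lam i \<noteq> 1)) \<longrightarrow>
           (\<forall>n m. 1 \<le> n \<and> 1 \<le> m \<and> m \<le> min n k1 \<longrightarrow>
              (\<forall>c \<in> carrier_vec m.
                 mat_of_cols n\<theta> (take m (cols (Wmat S F \<theta>0 n))) *\<^sub>v c = 0\<^sub>v n\<theta> \<longrightarrow> c = 0\<^sub>v m)))"
proof (cases "dim_row (pinv F) = n\<theta>")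
  case True
  interpret l: L S F \<theta>0 n\<theta> nx k1 k2 \<rho> lam v
    by (unfold_locales) (use assms in auto)
  have d: "dim_row (pinv F) = dim_vec \<theta>0" using True th by auto
  show ?thesis
  proof (intro conjI allI impI ballI)
    fix l i j :: nat assume "i \<le> l \<and> j \<le> l \<and> i \<noteq> j"
    thus "zv S F \<theta>0 i \<bullet> zv S F \<theta>0 j = 0" using zv_orth[OF d] by auto
  next
    fix n m :: nat and c
    assume h: "inj_on lam {1..k1+k2} \<and> (\<forall>i\<in>{1..k1}. lam i \<noteq> 1)"
      and nm: "1 \<le> n \<and> 1 \<le> m \<and> m \<le> min n k1" and c: "c \<in> carrier_vec m"
      and W: "mat_of_cols n\<theta> (take m (cols (Wmat S F \<theta>0 n))) *\<^sub>v c = 0\<^sub>v n\<theta>"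
    show "c = 0\<^sub>v m"
      by (rule l.part2[OF True _ _ _ _ _ c W]) (use h nm in auto)
  qed
next
  case False
  have k1: "k1 = 0"
  proof (rule ccontr)
    assume "k1 \<noteq> 0"
    hence i: "1 \<in> {1..k1}" by auto
    have "dim_vec (map_mat complex_of_real (pinv F * F) *\<^sub>v v 1) = dim_vec (v 1)" using modes1 i by simp
    moreover have "v 1 \<in> carrier_vec n\<theta>" using vdim i by auto
    ultimately show False using False by simp
  qed
  have k2: "k2 = 0"
  proof (rule ccontr)
    assume "k2 \<noteq> 0"
    hence i: "k1 + 1 \<in> {k1+1..k1+k2}" by auto
    have "dim_vec (map_mat complex_of_real (pinv F * F) *\<^sub>v v (k1+1)) = n\<theta>" using modes2 i by simp
    thus False using False by simp
  qed
  have t0: "\<theta>0 = 0\<^sub>v n\<theta>" using decomp th k1 k2 by (intro eq_vecI) auto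
  show ?thesis
  proof (intro conjI allI impI ballI)
    fix l i j :: nat
    obtain a where a: "zv S F \<theta>0 j = 0\<^sub>v a"
      using degen_zero[OF t0, of "zv S F \<theta>0 j" S F j] unfolding zv_def
      by (metis last_in_set length_0_conv nat.distinct(1) zs_len)
    show "zv S F \<theta>0 i \<bullet> zv S F \<theta>0 j = 0" unfolding a by (simp add: scalar_prod_def)
  next
    fix n m :: nat and c
    assume "1 \<le> n \<and> 1 \<le> m \<and> m \<le> min n k1"
    thus "c = 0\<^sub>v m" using k1 by auto
  qed
qed


end
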